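(* Let $0<\alpha<\pi/4$ and $S=S(-\alpha,\alpha;1)=\{z\in\mathbb{C}:0<|z|<1,\ -\alpha<\arg z<\alpha\}$. Let $f$ be holomorphic in $S$ and continuous on $\overline{S}\setminus\{0\}$, and suppose there are $M,C,\lambda>0$ with $|f(z)|\le M$ on $S$ and $|f(z)|\le C|z|^{\lambda}$ for $z\in\overline S\setminus\{0\}$ with $\arg z=-\alpha$. Then for every $\varepsilon\in(0,1)$ there exists $K>0$ such that for every $z\in\overline{S}\setminus\{0\}$, $$|f(z)|\le K\big(C|z|^{\lambda}\big)^{(1-\varepsilon)\frac{\alpha-\theta}{2\alpha}},\qquad\theta=\arg z.$$ *)

theory Defs
  imports "HOL-Complex_Analysis.Complex_Analysis"
begin

definition sector :: "real \<Rightarrow> real \<Rightarrow> real \<Rightarrow> complex set" where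
  "sector a b r = {z. 0 < norm z \<and> norm z < r \<and> a < Arg z \<and> Arg z < b}"

end

theory Submission
  imports Defs
begin


lemma sector_char:
  assumes "0 < \<alpha>" "\<alpha> < pi/2"
  shows "z \<in> sector (-\<alpha>) \<alpha> 1 \<longleftrightarrow> Re z > 0 \<and> norm z < 1 \<and> -\<alpha> < Arg z \<and> Arg z < \<alpha>"
proof
  assume h: "z \<in> sector (-\<alpha>) \<alpha> 1"
  then have "\<bar>Arg z\<bar> < pi/2" "z \<noteq> 0" using assms by (auto simp: sector_def)
  then have "Re z > 0" using Arg_Re_pos by blast
  then show "Re z > 0 \<and> norm z < 1 \<and> -\<alpha> < Arg z \<and> Arg z < \<alpha>" using h by (auto simp: sector_def)
next
  assume "Re z > 0 \<and> norm z < 1 \<and> -\<alpha> < Arg z \<and> Arg z < \<alpha>"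
  moreover then have "z \<noteq> 0" by auto
  ultimately show "z \<in> sector (-\<alpha>) \<alpha> 1" by (auto simp: sector_def)
qed

lemma sector_open:
  assumes "0 < \<alpha>" "\<alpha> < pi/2"
  shows "open (sector (-\<alpha>) \<alpha> 1)"
proof -
  have eq: "sector (-\<alpha>) \<alpha> 1 = ({z. Re z > 0} \<inter> ball 0 1) \<inter> Arg -` {-\<alpha><..<\<alpha>}"
    by (rule set_eqI) (simp add: sector_char[OF assms])
  have c: "continuous_on ({z. Re z > 0} \<inter> ball 0 1) Arg"
    by (rule continuous_on_subset[OF continuous_on_Arg]) (auto simp: complex_nonpos_Reals_iff)
  have o: "open ({z. Re z > 0} \<inter> ball (0::complex) 1)"
    using open_halfspace_Re_gt[of 0] open_ball by (rule open_Int)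
  show ?thesis unfolding eq
    by (rule continuous_open_preimage[OF c o]) simp
qed

lemma Arg_le_iff_tan:
  assumes "Re z > 0" "0 < \<alpha>" "\<alpha> < pi/2"
  shows "Arg z \<le> \<alpha> \<longleftrightarrow> Im z / Re z \<le> tan \<alpha>"
    and "Arg z < \<alpha> \<longleftrightarrow> Im z / Re z < tan \<alpha>"
    and "-\<alpha> \<le> Arg z \<longleftrightarrow> - tan \<alpha> \<le> Im z / Re z"
    and "-\<alpha> < Arg z \<longleftrightarrow> - tan \<alpha> < Im z / Re z"
proof -
  have a: "Arg z = arctan (Im z / Re z)" using arg_conv_arctan assms by blast
  have t: "\<alpha> = arctan (tan \<alpha>)" using arctan_tan assms by simp
  have t2: "-\<alpha> = arctan (- tan \<alpha>)" using arctan_minus t by simp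
  show "Arg z \<le> \<alpha> \<longleftrightarrow> Im z / Re z \<le> tan \<alpha>" by (subst a, subst t, rule arctan_le_iff)
  show "Arg z < \<alpha> \<longleftrightarrow> Im z / Re z < tan \<alpha>" by (subst a, subst t, rule arctan_less_iff)
  show "-\<alpha> \<le> Arg z \<longleftrightarrow> - tan \<alpha> \<le> Im z / Re z" by (subst a, subst t2, rule arctan_le_iff)
  show "-\<alpha> < Arg z \<longleftrightarrow> - tan \<alpha> < Im z / Re z" by (subst a, subst t2, rule arctan_less_iff)
qed

lemma geom:
  assumes "0 < \<alpha>" "\<alpha> < pi/2" "z \<in> closure (sector (-\<alpha>) \<alpha> 1)" "z \<noteq> 0"
  shows "Re z > 0 \<and> norm z \<le> 1 \<and> -\<alpha> \<le> Arg z \<and> Arg z \<le> \<alpha>"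
proof -
  have T: "tan \<alpha> > 0" using assms tan_gt_zero by auto
  let ?P = "{z. \<bar>Im z\<bar> \<le> tan \<alpha> * Re z} \<inter> cball 0 1"
  have "closed ?P"
    by (intro closed_Int closed_cball closed_Collect_le continuous_intros)
  moreover have "sector (-\<alpha>) \<alpha> 1 \<subseteq> ?P"
  proof
    fix w assume w: "w \<in> sector (-\<alpha>) \<alpha> 1"
    then have r: "Re w > 0" "norm w < 1" "-\<alpha> < Arg w" "Arg w < \<alpha>"
      using sector_char[OF assms(1,2)] by auto
    then have "Im w / Re w < tan \<alpha>" "- tan \<alpha> < Im w / Re w"
      using Arg_le_iff_tan[OF r(1) assms(1,2)] by auto
    then have "\<bar>Im w\<bar> \<le> tan \<alpha> * Re w" using r(1)
      by (auto simp: field_simps abs_if)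
    then show "w \<in> ?P" using r by auto
  qed
  ultimately have "z \<in> ?P" using assms(3) closure_minimal by blast
  then have zP: "\<bar>Im z\<bar> \<le> tan \<alpha> * Re z" "norm z \<le> 1" by auto
  have "Re z > 0"
  proof (rule ccontr)
    assume "\<not> Re z > 0"
    then have "tan \<alpha> * Re z \<le> 0" using T by (simp add: mult_nonneg_nonpos)
    then have i0: "Im z = 0" using zP by auto
    have "0 \<le> tan \<alpha> * Re z" using zP(1) abs_ge_zero order_trans by blast
    then have "Re z \<ge> 0" using T by (simp add: zero_le_mult_iff)
    then have "Re z = 0" using \<open>\<not> Re z > 0\<close> by simp
    then show False using assms(4) i0 complex_eqI by force
  qed
  moreover have "Im z / Re z \<le> tan \<alpha>" "- tan \<alpha> \<le> Im z / Re z"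
    using zP(1) \<open>Re z > 0\<close> by (auto simp: field_simps abs_le_iff)
  ultimately show ?thesis using Arg_le_iff_tan(1,3)[OF \<open>Re z > 0\<close> assms(1,2)] zP(2) by blast
qed



definition Psi :: "real \<Rightarrow> real \<Rightarrow> real \<Rightarrow> complex \<Rightarrow> complex" where
  "Psi a C lam w = ((of_real a + \<i> * w) * of_real (ln C) + of_real lam * (of_real a * w + \<i> * w^2 / 2)) / of_real (2*a)"

lemma Re_Psi: "Re (Psi a C lam w) = (a - Im w) * (ln C + lam * Re w) / (2*a)"
  unfolding Psi_def by (simp add: power2_eq_square algebra_simps Re_divide_of_real)

lemma norm_exp_Psi:
  assumes "z \<noteq> 0" "C > 0"
  shows "norm (exp (- (of_real e * Psi a C lam (Ln z)))) = (C * norm z powr lam) powr (- (e * (a - Arg z) / (2*a)))"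
proof -
  have A: "C * norm z powr lam > 0" using assms by simp
  have l: "ln (C * norm z powr lam) = ln C + lam * ln (norm z)"
    using assms by (simp add: ln_mult ln_powr)
  have "norm (exp (- (of_real e * Psi a C lam (Ln z)))) = exp (- (e * ((a - Arg z) * (ln C + lam * ln (norm z)) / (2*a))))"
    using assms by (simp add: Re_Psi Arg_eq_Im_Ln)
  also have "\<dots> = (C * norm z powr lam) powr (- (e * (a - Arg z) / (2*a)))"
  proof -
    have p: "(C * norm z powr lam) powr q = exp (q * ln (C * norm z powr lam))" for q
      using A assms unfolding powr_def[of "C * norm z powr lam"] by simp
    show ?thesis unfolding p l by (simp add: field_simps)
  qed
  finally show ?thesis .
qed

lemma powr_neg_le:
  fixes A q :: real
  assumes "0 < A" "0 \<le> q" "q \<le> 1"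
  shows "A powr (- q) \<le> 1 + 1/A"
proof (cases "A \<ge> 1")
  case True
  have "A powr q \<ge> 1" using True assms by (intro ge_one_powr_ge_zero)
  then have "A powr (-q) \<le> 1" by (auto simp: powr_minus_divide divide_le_eq_1)
  then show ?thesis using assms by (smt (verit) divide_pos_pos)
next
  case False
  have "A powr (-q) = (1/A) powr q" using assms by (simp add: powr_minus_divide powr_divide)
  also have "\<dots> \<le> (1/A) powr 1" using assms False by (intro powr_mono) auto
  also have "\<dots> = 1/A" using assms by simp
  finally show ?thesis by simp
qed

lemma powr_pos_le:
  fixes A q :: real
  assumes "0 < A" "0 \<le> q" "q \<le> 1"
  shows "A powr q \<le> 1 + A"
proof (cases "A \<ge> 1")
  case True
  then have "A powr q \<le> A powr 1" using assms by (intro powr_mono) auto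
  then show ?thesis using assms by simp
next
  case False
  then have "A powr q \<le> A powr 0" using assms by (intro powr_mono') auto
  then show ?thesis using assms by simp
qed

lemma rho_exists:
  fixes c lam b :: real
  assumes "c > 0" "lam > 0" "b > 0"
  shows "\<exists>\<rho>>0. \<rho> < b \<and> \<rho> powr (- lam) * exp (- c / \<rho>) \<le> 1"
proof -
  define t where "t = max (1/b + 1) (4 * lam^2 / c^2 + 1)"
  have p1: "4 * lam^2 / c^2 \<ge> 0" "1/b > 0" using assms by auto
  have ta: "t \<ge> 1/b + 1" "t \<ge> 4 * lam^2 / c^2 + 1" unfolding t_def by auto
  have t1: "t > 1/b" "t \<ge> 4 * lam^2 / c^2" "t > 0" using ta p1 by linarith+
  define y where "y = c * t / lam"
  have y0: "y \<ge> 0" unfolding y_def using assms t1 by simp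
  have "exp y = exp (y/2) * exp (y/2)" by (simp flip: exp_add)
  also have "\<dots> \<ge> (y/2) * (y/2)"
  proof -
    have "y/2 \<le> exp (y/2)" using exp_ge_add_one_self[of "y/2"] by linarith
    then show ?thesis using y0 by (intro mult_mono) auto
  qed
  finally have ey: "exp y \<ge> y^2/4" by (simp add: power2_eq_square)
  have "y^2/4 = c^2 * t^2 / (4 * lam^2)" unfolding y_def using assms by (simp add: power_divide power_mult_distrib)
  also have "\<dots> \<ge> t"
  proof -
    have "t * (4 * lam^2) \<le> c^2 * t^2"
      using t1(2) t1(3) assms by (simp add: field_simps power2_eq_square)
    then show ?thesis using assms by (simp add: field_simps)
  qed
  finally have tle: "t \<le> exp y" using ey by simp
  have "t powr lam \<le> exp y powr lam" using tle t1 assms by (intro powr_mono2) auto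
  also have "\<dots> = exp (c * t)" unfolding y_def using assms by (simp add: exp_powr_real)
  finally have key: "t powr lam \<le> exp (c * t)" .
  define \<rho> where "\<rho> = 1 / t"
  have r0: "\<rho> > 0" "\<rho> < b" unfolding \<rho>_def using t1 assms by (auto simp: field_simps)
  have "\<rho> powr (- lam) = t powr lam" unfolding \<rho>_def using t1 by (simp add: powr_minus_divide powr_divide)
  moreover have "exp (- c / \<rho>) = 1 / exp (c * t)" unfolding \<rho>_def by (simp add: exp_minus field_simps)
  ultimately have "\<rho> powr (- lam) * exp (- c / \<rho>) \<le> 1" using key by simp
  then show ?thesis using r0 by blast
qed


lemma Psi_holo: "Psi a C lam holomorphic_on UNIV"
  unfolding Psi_def by (intro holomorphic_intros) auto

lemma expPsi_holo: "T \<inter> \<real>\<^sub>\<le>\<^sub>0 = {} \<Longrightarrow> (\<lambda>z. exp (- (of_real e * Psi a C lam (Ln z)))) holomorphic_on T"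
proof -
  assume h: "T \<inter> \<real>\<^sub>\<le>\<^sub>0 = {}"
  have "(\<lambda>z. Psi a C lam (Ln z)) holomorphic_on T"
    using holomorphic_on_compose[OF holomorphic_on_Ln[OF h] Psi_holo[THEN holomorphic_on_subset]]
    by (auto simp: o_def)
  then show ?thesis by (intro holomorphic_on_exp' holomorphic_on_minus holomorphic_on_mult holomorphic_on_const)
qed

lemma expPsi_cont: "(\<And>z. z \<in> T \<Longrightarrow> z \<notin> \<real>\<^sub>\<le>\<^sub>0) \<Longrightarrow> continuous_on T (\<lambda>z. exp (- (of_real e * Psi a C lam (Ln z))))"
proof -
  assume h: "\<And>z. z \<in> T \<Longrightarrow> z \<notin> \<real>\<^sub>\<le>\<^sub>0"
  have "continuous_on T (\<lambda>z. Psi a C lam (Ln z))"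
    using continuous_on_compose[OF continuous_on_Ln[OF h] holomorphic_on_imp_continuous_on[OF Psi_holo[THEN holomorphic_on_subset]]]
    by (auto simp: o_def)
  then show ?thesis by (intro continuous_on_exp continuous_on_minus continuous_on_mult continuous_on_const)
qed

lemma expdiv_holo: "0 \<notin> T \<Longrightarrow> (\<lambda>z. exp (- (of_real (d::real) / z))) holomorphic_on T"
  by (intro holomorphic_on_exp' holomorphic_on_minus holomorphic_on_divide holomorphic_on_const holomorphic_on_ident) auto

lemma expdiv_cont: "0 \<notin> T \<Longrightarrow> continuous_on (T::complex set) (\<lambda>z. exp (- (of_real d / z)))"
  by (intro continuous_on_exp continuous_on_minus continuous_on_divide continuous_on_const continuous_on_id) auto

theorem lemma5p2:
  fixes \<alpha> M C lam :: real and f :: "complex \<Rightarrow> complex"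
  assumes "0 < \<alpha>" and "\<alpha> < pi / 4"
    and "f holomorphic_on sector (-\<alpha>) \<alpha> 1"
    and "continuous_on (closure (sector (-\<alpha>) \<alpha> 1) - {0}) f"
    and "0 < M" and "0 < C" and "0 < lam"
    and "\<forall>z \<in> sector (-\<alpha>) \<alpha> 1. norm (f z) \<le> M"
    and "\<forall>z \<in> closure (sector (-\<alpha>) \<alpha> 1) - {0}. Arg z = -\<alpha> \<longrightarrow> norm (f z) \<le> C * norm z powr lam"
  shows "\<forall>\<epsilon>. 0 < \<epsilon> \<and> \<epsilon> < 1 \<longrightarrow>
           (\<exists>K > 0. \<forall>z \<in> closure (sector (-\<alpha>) \<alpha> 1) - {0}.
              norm (f z) \<le> K * (C * norm z powr lam) powr ((1 - \<epsilon>) * (\<alpha> - Arg z) / (2 * \<alpha>)))"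
proof (intro allI impI)
  fix \<epsilon> :: real
  assume eps: "0 < \<epsilon> \<and> \<epsilon> < 1"
  define S where "S = sector (-\<alpha>) \<alpha> 1"
  have a0: "0 < \<alpha>" and a2: "\<alpha> < pi/2" using assms(1,2) by auto
  define q :: "complex \<Rightarrow> real" where "q z = (1 - \<epsilon>) * (\<alpha> - Arg z) / (2 * \<alpha>)" for z
  define A :: "complex \<Rightarrow> real" where "A z = C * norm z powr lam" for z
  define F :: "complex \<Rightarrow> complex" where "F z = f z * exp (- (of_real (1 - \<epsilon>) * Psi \<alpha> C lam (Ln z)))" for z
  define B where "B = M * (1 + 1/C) + (1 + C)"
  have BM: "B = M + M / C + 1 + C" unfolding B_def by (simp add: distrib_left)
  have MC: "M / C > 0" using assms(5,6) by simp
  have Bpos: "B > 0" using BM MC assms(5,6) by linarith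
  have Mle: "M \<le> B" using BM MC assms(5,6) by linarith
  have MCle: "M * (1 + 1/C) \<le> B"
  proof -
    have "M * (1 + 1/C) = M + M / C" by (simp add: distrib_left)
    then show ?thesis using BM MC assms(5,6) by linarith
  qed
  have Cle: "1 + C \<le> B" using BM MC assms(5,6) by linarith
  have MMle: "M * 1 + (M / C) * 1 \<le> B" using BM MC assms(5,6) by linarith
  have gm: "Re z > 0 \<and> norm z \<le> 1 \<and> -\<alpha> \<le> Arg z \<and> Arg z \<le> \<alpha>" if "z \<in> closure S" "z \<noteq> 0" for z
    using geom[OF a0 a2] that unfolding S_def by blast
  have Sopen: "open S" unfolding S_def using sector_open[OF a0 a2] .
  have S0: "0 \<notin> S" unfolding S_def sector_def by simp
  have Sball: "S \<subseteq> ball 0 1" unfolding S_def sector_def by auto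
  have SsubC: "S \<subseteq> closure S - {0}" using S0 closure_subset by blast
  have notnp: "z \<notin> \<real>\<^sub>\<le>\<^sub>0" if "z \<in> closure S - {0}" for z
    using gm[of z] that by (auto simp: complex_nonpos_Reals_iff)
  have contF: "continuous_on (closure S - {0}) F"
    unfolding F_def using assms(4)[folded S_def] expPsi_cont[of "closure S - {0}", OF notnp]
    by (rule continuous_on_mult)
  have holF: "F holomorphic_on S"
  proof -
    have h: "S \<inter> \<real>\<^sub>\<le>\<^sub>0 = {}" using notnp SsubC by blast
    show ?thesis unfolding F_def by (rule holomorphic_on_mult[OF assms(3)[folded S_def] expPsi_holo[OF h]])
  qed
  have Apos: "A z > 0" if "z \<noteq> 0" for z unfolding A_def using assms(6) that by simp
  have normF: "norm (F z) = norm (f z) * A z powr (- q z)" if "z \<noteq> 0" for z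
    unfolding F_def A_def q_def using norm_exp_Psi[OF that assms(6), of "1 - \<epsilon>" \<alpha> lam]
    by (simp add: norm_mult)
  have q01: "0 \<le> q z \<and> q z \<le> 1" if "z \<in> closure S" "z \<noteq> 0" for z
  proof -
    define w where "w = (\<alpha> - Arg z) / (2 * \<alpha>)"
    have "-\<alpha> \<le> Arg z" "Arg z \<le> \<alpha>" using gm[OF that] by auto
    then have w0: "0 \<le> w" "w \<le> 1" unfolding w_def using a0 by (auto simp: field_simps)
    have qe: "q z = (1 - \<epsilon>) * w" unfolding q_def w_def by simp
    have "0 \<le> (1 - \<epsilon>) * w" using w0 eps by simp
    moreover have "(1 - \<epsilon>) * w \<le> 1" using w0 eps by (intro mult_le_one) auto
    ultimately show ?thesis unfolding qe by simp
  qed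
  have mainF: "norm (F \<xi>) \<le> B" if \<xi>: "\<xi> \<in> closure S - {0}" for \<xi>
  proof -
    define k where "k = Re \<xi> / (norm \<xi>)^2"
    have bound: "norm (F \<xi>) * exp (- \<delta> * k) \<le> B" if dpos: "\<delta> > 0" for \<delta>
    proof -
      have ca: "cos \<alpha> > 0" using a0 a2 by (intro cos_gt_zero) auto
      define c where "c = \<delta> * cos \<alpha>"
      have c0: "c > 0" unfolding c_def using dpos ca by simp
      have r0: "norm \<xi> > 0" using \<xi> by auto
      obtain \<rho> where \<rho>: "\<rho> > 0" "\<rho> < norm \<xi>" "\<rho> powr (- lam) * exp (- c / \<rho>) \<le> 1"
        using rho_exists[OF c0 assms(7) r0] by blast
      define U where "U = S \<inter> {z. \<rho> < norm z}"
      define G :: "complex \<Rightarrow> complex" where "G z = F z * exp (- (of_real \<delta> / z))" for z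
      have Uopen: "open U" unfolding U_def using Sopen by (intro open_Int open_Collect_less continuous_intros)
      have closU: "closure U \<subseteq> closure S \<inter> {z. \<rho> \<le> norm z}"
      proof -
        have "closed (closure S \<inter> {z. \<rho> \<le> norm z})" by (intro closed_Int closed_closure closed_Collect_le continuous_intros)
        moreover have "U \<subseteq> closure S \<inter> {z. \<rho> \<le> norm z}" unfolding U_def using closure_subset by fastforce
        ultimately show ?thesis by (rule closure_minimal[rotated])
      qed
      have closU0: "closure U \<subseteq> closure S - {0}" using closU \<rho>(1) by auto
      have normG: "norm (G z) = norm (F z) * exp (- \<delta> * (Re z / (norm z)^2))" for z
        unfolding G_def by (simp add: norm_mult Re_divide cmod_power2)
      have Xle1: "exp (- \<delta> * (Re z / (norm z)^2)) \<le> 1" if "Re z > 0" for z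
        using that dpos by simp
      have fM: "norm (f z) \<le> M" if "z \<in> closure U" for z
      proof (rule continuous_on_closure_norm_le[of U f M z])
        show "continuous_on (closure U) f" using assms(4) closU0 unfolding S_def by (rule continuous_on_subset)
        show "\<forall>y\<in>U. norm (f y) \<le> M" using assms(8) unfolding U_def S_def by auto
      qed (rule that)
      have contG: "continuous_on (closure U) G"
        unfolding G_def using continuous_on_subset[OF contF closU0] expdiv_cont
        by (rule continuous_on_mult) (use closU0 in auto)
      have holG: "G holomorphic_on (interior U)"
      proof -
        have "interior U = U" using Uopen by (rule interior_open)
        moreover have "F holomorphic_on U" using holF unfolding U_def by (rule holomorphic_on_subset) auto
        moreover have "0 \<notin> U" using S0 unfolding U_def by auto
        ultimately show ?thesis unfolding G_def using expdiv_holo[of U] holomorphic_on_mult by metis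
      qed
      have bdd: "bounded U" using Sball unfolding U_def by (meson bounded_ball bounded_subset inf.coboundedI1)
      have frontB: "norm (G z) \<le> B" if zf: "z \<in> frontier U" for z
      proof -
        have zc: "z \<in> closure U" and zU: "z \<notin> U" using zf Uopen by (auto simp: frontier_def interior_open)
        have zS: "z \<in> closure S" and zr: "\<rho> \<le> norm z" using closU zc by auto
        have z0: "z \<noteq> 0" using zr \<rho>(1) by auto
        have g: "Re z > 0" "norm z \<le> 1" "-\<alpha> \<le> Arg z" "Arg z \<le> \<alpha>" using gm[OF zS z0] by auto
        have fz: "norm (f z) \<le> M" using fM[OF zc] .
        have qz: "0 \<le> q z" "q z \<le> 1" using q01[OF zS z0] by auto
        have nG: "norm (G z) = norm (f z) * A z powr (- q z) * exp (- \<delta> * (Re z / (norm z)^2))"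
          using normG normF[OF z0] by simp
        have Pl: "A z powr (- q z) \<le> 1 + 1 / A z" using powr_neg_le[OF Apos[OF z0] qz] .
        have P0: "A z powr (- q z) \<ge> 0" by simp
        have X0: "exp (- \<delta> * (Re z / (norm z)^2)) \<ge> 0" by simp
        have G1: "norm (G z) \<le> norm (f z) * A z powr (- q z)"
          unfolding nG using Xle1[OF g(1)] P0 by (simp add: mult_left_le)
        have "\<not> (Re z > 0 \<and> norm z < 1 \<and> -\<alpha> < Arg z \<and> Arg z < \<alpha>) \<or> \<not> \<rho> < norm z"
          using zU sector_char[OF a0 a2, of z] unfolding U_def S_def by auto
        then have cases: "norm z = 1 \<or> Arg z = -\<alpha> \<or> Arg z = \<alpha> \<or> norm z = \<rho>"
          using g zr by linarith
        show ?thesis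
        proof -
          consider "norm z = 1" | "Arg z = \<alpha>" | "Arg z = -\<alpha>" | "norm z = \<rho>" using cases by blast
          then show ?thesis
          proof cases
            case 1
            then have "A z = C" unfolding A_def by simp
            then have "norm (f z) * A z powr (- q z) \<le> M * (1 + 1/C)"
              using fz Pl P0 assms(5) by (intro mult_mono) auto
            then show ?thesis using G1 MCle by linarith
          next
            case 2
            then have "q z = 0" unfolding q_def by simp
            then have "norm (f z) * A z powr (- q z) = norm (f z)" using Apos[OF z0] by simp
            then show ?thesis using G1 fz Mle by linarith
          next
            case 3
            then have qe: "q z = 1 - \<epsilon>" unfolding q_def using a0 by (simp add: field_simps)
            have fA: "norm (f z) \<le> A z" using assms(9) zS z0 3 unfolding A_def S_def by auto
            have "norm (f z) * A z powr (- q z) \<le> A z * A z powr (- q z)"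
              using fA P0 by (rule mult_right_mono)
            also have "\<dots> = A z powr 1 * A z powr (- q z)" using Apos[OF z0] by simp
            also have "\<dots> = A z powr (1 + - q z)" by (rule powr_add[symmetric])
            also have "\<dots> = A z powr \<epsilon>" using qe by simp
            also have "\<dots> \<le> 1 + A z" using powr_pos_le[OF Apos[OF z0], of \<epsilon>] eps by simp
            also have "\<dots> \<le> 1 + C"
            proof -
              have "norm z powr lam \<le> 1" using powr_mono'[of 0 lam "norm z"] g(2) assms(7) z0 by simp
              then show ?thesis unfolding A_def using assms(6) by (simp add: mult_left_le)
            qed
            finally show ?thesis using G1 Cle by linarith
          next
            case 4
            have Az: "1 / A z = \<rho> powr (- lam) / C" unfolding A_def 4 by (simp add: powr_minus_divide)
            have cosle: "cos \<alpha> \<le> cos (Arg z)"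
            proof -
              have "cos \<alpha> \<le> cos \<bar>Arg z\<bar>" using g a2 by (intro cos_monotone_0_pi_le) auto
              then show ?thesis by simp
            qed
            have "Re z / (norm z)^2 = cos (Arg z) / \<rho>" using cos_Arg[OF z0] 4 \<rho>(1)
              by (simp add: power2_eq_square field_simps)
            then have "\<delta> * (Re z / (norm z)^2) \<ge> c / \<rho>" unfolding c_def using cosle dpos \<rho>(1)
              by (simp add: divide_right_mono)
            then have Xle: "exp (- \<delta> * (Re z / (norm z)^2)) \<le> exp (- c / \<rho>)" by simp
            have "norm (G z) \<le> M * (1 + \<rho> powr (- lam) / C) * exp (- c / \<rho>)"
              unfolding nG using fz Pl P0 X0 Xle Az assms(5,6) by (intro mult_mono) (auto intro!: mult_nonneg_nonneg add_nonneg_nonneg divide_nonneg_pos)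
            also have "\<dots> = M * exp (- c / \<rho>) + (M / C) * (\<rho> powr (- lam) * exp (- c / \<rho>))"
              by (simp add: algebra_simps)
            also have "\<dots> \<le> M * 1 + (M / C) * 1"
            proof (intro add_mono mult_left_mono)
              show "exp (- c / \<rho>) \<le> 1" using c0 \<rho>(1) by simp
            qed (use \<rho>(3) assms(5,6) in auto)
            also have "\<dots> \<le> B" by (rule MMle)
            finally show ?thesis .
          qed
        qed
      qed
      have GU: "norm (G z) \<le> B" if "z \<in> U" for z
        using maximum_modulus_frontier[OF holG contG bdd frontB that] .
      have \<xi>U: "\<xi> \<in> closure U"
      proof -
        have "\<xi> \<in> {z. \<rho> < norm z} \<inter> closure S" using \<xi> \<rho>(2) by auto
        also have "\<dots> \<subseteq> closure ({z. \<rho> < norm z} \<inter> S)"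
          by (intro open_Int_closure_subset open_Collect_less continuous_intros)
        finally show ?thesis unfolding U_def by (simp add: Int_commute)
      qed
      have "norm (G \<xi>) \<le> B" using continuous_on_closure_norm_le[OF contG _ \<xi>U] GU by blast
      then show ?thesis using normG[of \<xi>] unfolding k_def by simp
    qed
    have lim: "((\<lambda>\<delta>. norm (F \<xi>) * exp (- \<delta> * k)) \<longlongrightarrow> norm (F \<xi>) * exp (- 0 * k)) (at_right 0)"
      by (intro tendsto_intros)
    have ev: "eventually (\<lambda>\<delta>. norm (F \<xi>) * exp (- \<delta> * k) \<le> B) (at_right (0::real))"
      using eventually_at_right_less by (rule eventually_mono) (rule bound)
    have "norm (F \<xi>) * exp (- 0 * k) \<le> B"
      using lim ev by (rule tendsto_upperbound) simp
    then show ?thesis by simp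
  qed
  show "\<exists>K > 0. \<forall>z \<in> closure (sector (-\<alpha>) \<alpha> 1) - {0}.
              norm (f z) \<le> K * (C * norm z powr lam) powr ((1 - \<epsilon>) * (\<alpha> - Arg z) / (2 * \<alpha>))"
  proof (intro exI[of _ B] conjI ballI)
    show "B > 0" by (rule Bpos)
    fix z assume z: "z \<in> closure (sector (-\<alpha>) \<alpha> 1) - {0}"
    then have z0: "z \<noteq> 0" and zS: "z \<in> closure S - {0}" unfolding S_def by auto
    have "norm (f z) = norm (f z) * A z powr (- q z) * A z powr (q z)"
      using Apos[OF z0] by (simp add: powr_minus field_simps)
    also have "\<dots> = norm (F z) * A z powr (q z)" using normF[OF z0] by simp
    also have "\<dots> \<le> B * A z powr (q z)" using mainF[OF zS] by (intro mult_right_mono) auto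
    finally show "norm (f z) \<le> B * (C * norm z powr lam) powr ((1 - \<epsilon>) * (\<alpha> - Arg z) / (2 * \<alpha>))"
      unfolding A_def q_def .
  qed
qed

end
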